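(* Let $N\ge 1$, let $\mathbf{h}_s,\mathbf{h}_0\in\mathbb{C}^N$, let $\mathbf{R}\in\mathbb{C}^{N\times N}$ be Hermitian positive definite, and let $\bar P>0$, $P_t>0$, $\epsilon>0$. Consider the robust design problem $\mathbf{P1}$: $$\max_{\mathbf{S}\succeq 0}\ \log\big(1+\mathbf{h}_s^H\mathbf{S}\mathbf{h}_s\big)\quad\text{subject to}\quad \mathrm{tr}(\mathbf{S})\le \bar P,\ \ \mathbf{h}^H\mathbf{S}\mathbf{h}\le P_t\ \text{ for all } \mathbf{h}\in\mathbb{C}^N \text{ with } (\mathbf{h}-\mathbf{h}_0)^H\mathbf{R}^{-1}(\mathbf{h}-\mathbf{h}_0)\le\epsilon,$$ where the maximization is over Hermitian positive semidefinite $N\times N$ matrices $\mathbf{S}$. Then the optimal covariance matrix $\mathbf{S}$ of $\mathbf{P1}$ has rank one.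
   Context: $\mathbf{S}$ is the transmit covariance matrix of a secondary user with $N$ transmit antennas; $\mathbf{h}_s$ is the secondary link channel, and $\mathbf{h}$ is the (uncertain) channel to the primary user, known only to lie in the ellipsoid above with center $\mathbf{h}_0$ and shape matrix $\mathbf{R}$. *)

theory Defs
  imports "HOL-Analysis.Analysis"
begin

text \<open>Complex N x N matrices are represented as complex^'n^'n, with N = CARD('n).\<close>

definition hform :: "complex^'n^'n \<Rightarrow> complex^'n \<Rightarrow> complex" where
  "hform A x = (\<Sum>i\<in>UNIV. \<Sum>j\<in>UNIV. cnj (x$i) * (A$i$j) * (x$j))"

definition hermitian_mat :: "complex^'n^'n \<Rightarrow> bool" where
  "hermitian_mat A \<longleftrightarrow> (\<forall>i j. A$i$j = cnj (A$j$i))"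

definition psd_mat :: "complex^'n^'n \<Rightarrow> bool" where
  "psd_mat A \<longleftrightarrow> hermitian_mat A \<and> (\<forall>x. 0 \<le> Re (hform A x))"

definition pd_mat :: "complex^'n^'n \<Rightarrow> bool" where
  "pd_mat A \<longleftrightarrow> hermitian_mat A \<and> (\<forall>x. x \<noteq> 0 \<longrightarrow> 0 < Re (hform A x))"

text \<open>Feasible set of P1 (quadratic forms of Hermitian matrices are real, so Re is harmless).\<close>
definition P1_feasible ::
  "real \<Rightarrow> real \<Rightarrow> real \<Rightarrow> complex^'n^'n \<Rightarrow> complex^'n \<Rightarrow> complex^'n^'n \<Rightarrow> bool" where
  "P1_feasible Pbar Pt \<epsilon> R h0 S \<longleftrightarrow>
     psd_mat S \<and> Re (trace S) \<le> Pbar \<and>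
     (\<forall>h. Re (hform (matrix_inv R) (h - h0)) \<le> \<epsilon> \<longrightarrow> Re (hform S h) \<le> Pt)"

definition P1_objective :: "complex^'n \<Rightarrow> complex^'n^'n \<Rightarrow> real" where
  "P1_objective hs S = ln (1 + Re (hform S hs))"

definition P1_optimal ::
  "real \<Rightarrow> real \<Rightarrow> real \<Rightarrow> complex^'n^'n \<Rightarrow> complex^'n \<Rightarrow> complex^'n \<Rightarrow> complex^'n^'n \<Rightarrow> bool" where
  "P1_optimal Pbar Pt \<epsilon> R h0 hs S \<longleftrightarrow>
     P1_feasible Pbar Pt \<epsilon> R h0 S \<and>
     (\<forall>S'. P1_feasible Pbar Pt \<epsilon> R h0 S' \<longrightarrow> P1_objective hs S' \<le> P1_objective hs S)"

end

theory Submission imports Defs begin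

definition ip :: "complex^'n \<Rightarrow> complex^'n \<Rightarrow> complex" where
  "ip x v = (\<Sum>i\<in>UNIV. cnj (x$i) * v$i)"

definition outer :: "complex^'n \<Rightarrow> complex^'n^'n" where
  "outer v = (\<chi> i j. v$i * cnj (v$j))"

definition sesq :: "complex^'n^'n \<Rightarrow> complex^'n \<Rightarrow> complex^'n \<Rightarrow> complex" where
  "sesq A x y = (\<Sum>i\<in>UNIV. \<Sum>j\<in>UNIV. cnj (x$i) * (A$i$j) * (y$j))"


lemma hform_outer: "hform (outer v) x = ip x v * cnj (ip x v)"
proof -
  have "ip x v * cnj (ip x v) = (\<Sum>i\<in>UNIV. cnj (x$i) * v$i) * (\<Sum>j\<in>UNIV. cnj (v$j) * x$j)"
    by (simp add: ip_def cnj_sum mult.commute)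
  also have "\<dots> = (\<Sum>i\<in>UNIV. \<Sum>j\<in>UNIV. cnj (x$i) * v$i * (cnj (v$j) * x$j))"
    by (simp add: sum_product)
  finally show ?thesis unfolding hform_def outer_def by (simp add: mult.assoc)
qed

lemma Re_hform_outer: "Re (hform (outer v) x) = (cmod (ip x v))^2"
  unfolding hform_outer by (simp add: complex_mult_cnj cmod_def power2_eq_square)

lemma norm_sq_vec: "(norm (v::complex^'n))^2 = (\<Sum>i\<in>UNIV. (cmod (v$i))^2)"
  unfolding norm_vec_def L2_set_def by (simp add: sum_nonneg)

lemma Re_trace_outer: "Re (trace (outer v)) = (norm v)^2"
  unfolding norm_sq_vec trace_def outer_def
  by (simp add: complex_mult_cnj cmod_def power2_eq_square)

lemma hform_sesq: "hform S x = sesq S x x"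
  unfolding hform_def sesq_def by simp

lemma sesq_expand:
  "sesq S (p *s x + q *s y) (p *s x + q *s y) =
     cnj p * p * sesq S x x + cnj p * q * sesq S x y + cnj q * p * sesq S y x + cnj q * q * sesq S y y"
proof -
  have pt: "\<And>i j. cnj ((p *s x + q *s y)$i) * S$i$j * ((p *s x + q *s y)$j) =
     cnj p * p * (cnj (x$i) * S$i$j * x$j) + cnj p * q * (cnj (x$i) * S$i$j * y$j)
     + cnj q * p * (cnj (y$i) * S$i$j * x$j) + cnj q * q * (cnj (y$i) * S$i$j * y$j)"
    by (simp only: vector_add_component vector_smult_component complex_cnj_add complex_cnj_mult) algebra
  show ?thesis unfolding sesq_def pt by (simp only: sum.distrib sum_distrib_left)
qed

lemma sesq_herm: assumes "hermitian_mat S" shows "sesq S y x = cnj (sesq S x y)"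
proof -
  have h: "\<And>i j. cnj (S$i$j) = S$j$i" using assms unfolding hermitian_mat_def by (metis complex_cnj_cnj)
  show ?thesis unfolding sesq_def cnj_sum complex_cnj_mult complex_cnj_cnj h
    by (subst sum.swap) (simp add: mult.commute mult.left_commute)
qed

lemma cont_ip: "continuous_on A (\<lambda>v. ip h v)"
  unfolding ip_def by (intro continuous_intros)

lemma cont_hform: "continuous_on A (\<lambda>v. Re (hform Q v))"
  unfolding hform_def by (intro continuous_intros)

lemma ip_axis: "ip (axis i 1) v = v$i"
proof -
  have "\<And>j. cnj (axis i 1 $ j) * v$j = (if j = i then v$j else 0)" by (simp add: axis_def)
  then show ?thesis unfolding ip_def by simp
qed

lemma ip_scale: "ip x (c *s w) = c * ip x w"
  unfolding ip_def by (simp add: sum_distrib_left algebra_simps)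

lemma ip_mv: "ip x (S *v y) = sesq S x y"
  unfolding ip_def sesq_def matrix_vector_mult_def by (simp add: sum_distrib_left mult.assoc)

lemma sesq_axis: "sesq S (axis i 1) (axis i 1) = S$i$i"
proof -
  have "\<And>j. S$i$j * (axis i 1 $ j) = (if j = i then S$i$j else 0)" by (simp add: axis_def)
  then have "(S *v axis i 1)$i = S$i$i" unfolding matrix_vector_mult_def by simp
  then show ?thesis by (metis ip_mv ip_axis)
qed

lemma hform_mv: "hform A x = (\<Sum>i\<in>UNIV. cnj (x$i) * (A *v x)$i)"
  unfolding hform_def matrix_vector_mult_def by (simp add: sum_distrib_left mult.assoc)

lemma psd_sesq_real: assumes "hermitian_mat S" shows "sesq S x x = of_real (Re (sesq S x x))"
proof -
  have "sesq S x x = cnj (sesq S x x)" by (rule sesq_herm[OF assms])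
  then show ?thesis by (metis Reals_cnj_iff complex_is_Real_iff of_real_Re)
qed

lemma cs:
  assumes "psd_mat S" and b: "0 < Re (sesq S y y)"
  shows "(cmod (sesq S x y))^2 \<le> Re (sesq S x x) * Re (sesq S y y)"
proof -
  define a where "a = Re (sesq S x x)"
  define bb where "bb = Re (sesq S y y)"
  define c where "c = sesq S x y"
  have herm: "hermitian_mat S" using assms(1) unfolding psd_mat_def by simp
  have xx: "sesq S x x = of_real a" using psd_sesq_real[OF herm] a_def by simp
  have yy: "sesq S y y = of_real bb" using psd_sesq_real[OF herm] bb_def by simp
  have yx: "sesq S y x = cnj c"
    unfolding c_def by (rule sesq_herm[OF herm])
  have cc: "c * cnj c = of_real ((cmod c)^2)" by (metis complex_norm_square of_real_power)
  define z where "z = of_real bb *s x + (- cnj c) *s y"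
  have zz: "sesq S z z = of_real (bb*bb*a - bb * (cmod c)^2)"
  proof -
    have "sesq S z z = of_real bb * of_real bb * of_real a - of_real bb * (c * cnj c)
        - of_real bb * (c * cnj c) + of_real bb * (c * cnj c)"
      unfolding z_def sesq_expand[of S] xx yy yx c_def[symmetric]
      by (simp add: ring_distribs mult.assoc mult.left_commute)
    also have "\<dots> = of_real (bb*bb*a - bb * (cmod c)^2)" unfolding cc by simp
    finally show ?thesis .
  qed
  have "0 \<le> Re (sesq S z z)" using assms(1) unfolding psd_mat_def hform_def sesq_def by blast
  then have "0 \<le> bb*bb*a - bb * (cmod c)^2" unfolding zz by simp
  then have "0 \<le> bb * (bb*a - (cmod c)^2)" by (simp add: algebra_simps)
  then have "0 \<le> bb*a - (cmod c)^2" using b bb_def by (simp add: zero_le_mult_iff)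
  then show ?thesis unfolding a_def bb_def c_def by (simp add: mult.commute)
qed




lemma hform_scale: "hform A (c *s x) = cnj c * c * hform A x"
  using sesq_expand[of A c x 0 x] by (simp add: hform_sesq)

lemma norm_smult_c: "norm (c *s (x::complex^'n)) = cmod c * norm x"
proof -
  have "(norm (c *s x))^2 = (cmod c * norm x)^2"
    unfolding norm_sq_vec power_mult_distrib
    by (simp add: norm_mult power_mult_distrib sum_distrib_left)
  then show ?thesis by (rule power2_eq_imp_eq) auto
qed

lemma norm_axis_c: "norm (axis k (1::complex) :: complex^'n) = 1"
proof -
  have "\<And>i. (cmod (axis k (1::complex) $ i))^2 = (if i = k then 1 else 0)" by (simp add: axis_def)
  then have "(norm (axis k (1::complex) :: complex^'n))^2 = 1" unfolding norm_sq_vec by simp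
  then show ?thesis by (simp add: power2_eq_1_iff)
qed

lemma ip_axis_right: "ip h (axis k 1) = cnj (h$k)"
proof -
  have "\<And>j. cnj (h$j) * (axis k 1 $ j) = (if j = k then cnj (h$k) else 0)" by (simp add: axis_def)
  then show ?thesis unfolding ip_def by simp
qed

lemma rank_outer:
  assumes "v \<noteq> 0" shows "rank (outer v) = 1"
proof -
  obtain k where vk: "v$k \<noteq> 0" using assms by (metis vec_eq_iff zero_index)
  have rowi: "\<And>i. row i (outer v) = (v$i / v$k) *s row k (outer v)"
    using vk by (simp add: vec_eq_iff row_def outer_def)
  have rk0: "row k (outer v) \<noteq> 0"
  proof
    assume "row k (outer v) = 0"
    then have "row k (outer v) $ k = 0" by simp
    then show False using vk by (simp add: row_def outer_def)
  qed
  have "vec.dim (rows (outer v)) = 1"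
  proof (rule vec.dim_unique[of "{row k (outer v)}"])
    show "{row k (outer v)} \<subseteq> rows (outer v)" unfolding rows_def by blast
    show "rows (outer v) \<subseteq> vec.span {row k (outer v)}"
    proof
      fix r assume "r \<in> rows (outer v)"
      then obtain i where "r = row i (outer v)" unfolding rows_def by blast
      then have r: "r = (v$i / v$k) *s row k (outer v)" by (metis rowi)
      show "r \<in> vec.span {row k (outer v)}"
        unfolding r by (rule vec.span_scale, rule vec.span_base, simp)
    qed
    show "vec.independent {row k (outer v)}" using rk0 by simp
  qed simp
  then show ?thesis by (simp add: row_rank_def_gen)
qed

lemma outer_feasible:
  assumes "(norm v)^2 \<le> Pbar"
    and "\<forall>h. Re (hform (matrix_inv R) (h - h0)) \<le> \<epsilon> \<longrightarrow> (cmod (ip h v))^2 \<le> Pt"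
  shows "P1_feasible Pbar Pt \<epsilon> R h0 (outer v)"
  unfolding P1_feasible_def psd_mat_def hermitian_mat_def Re_trace_outer Re_hform_outer
  using assms by (simp add: outer_def mult.commute)

theorem lemma1:
  fixes hs h0 :: "complex^'n" and R :: "complex^'n^'n"
    and Pbar Pt \<epsilon> :: real
  assumes "pd_mat R" and "Pbar > 0" and "Pt > 0" and "\<epsilon> > 0"
  shows "\<exists>S. P1_optimal Pbar Pt \<epsilon> R h0 hs S \<and> rank S = 1"
proof -
  define Q where "Q = matrix_inv R"
  have pdR: "\<And>x. x \<noteq> 0 \<Longrightarrow> 0 < Re (hform R x)" using assms(1) unfolding pd_mat_def by blast
  have ker: "\<forall>x. R *v x = 0 \<longrightarrow> x = 0"
  proof (intro allI impI)
    fix x assume "R *v x = 0"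
    then have "hform R x = 0" by (simp add: hform_mv)
    then show "x = 0" using pdR by force
  qed
  then have "\<exists>B. B ** R = mat 1" using matrix_left_invertible_ker by blast
  then have invR: "invertible R" using invertible_left_inverse by blast
  then obtain A' where "R ** A' = mat 1 \<and> A' ** R = mat 1" unfolding invertible_def by blast
  then have "R ** Q = mat 1 \<and> Q ** R = mat 1" unfolding Q_def matrix_inv_def by (rule someI)
  then have RQ: "R ** Q = mat 1" by simp
  have Qpos: "0 < Re (hform Q x)" if "x \<noteq> 0" for x
  proof -
    define y where "y = Q *v x"
    have Ry: "R *v y = x" by (simp add: y_def matrix_vector_mul_assoc RQ)
    have "y \<noteq> 0" using Ry that by auto
    then have "0 < Re (hform R y)" by (rule pdR)
    moreover have "hform R y = cnj (hform Q x)"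
      by (simp add: hform_mv Ry y_def[symmetric] cnj_sum mult.commute)
    ultimately show ?thesis by simp
  qed
  obtain u1 :: "complex^'n" where "norm u1 = 1" using vector_choose_size[of 1] by auto
  then have sne: "sphere (0::complex^'n) 1 \<noteq> {}" by auto
  obtain x1 where x1: "x1 \<in> sphere 0 1" "\<And>y. y \<in> sphere 0 1 \<Longrightarrow> Re (hform Q x1) \<le> Re (hform Q y)"
    using continuous_attains_inf[OF compact_sphere sne cont_hform[of _ Q]] by blast
  define m where "m = Re (hform Q x1)"
  have m0: "0 < m" unfolding m_def using x1(1) by (intro Qpos) auto
  have mbound: "m * (norm x)^2 \<le> Re (hform Q x)" for x
  proof (cases "x = 0")
    case True then show ?thesis by (simp add: hform_def)
  next
    case False
    define u where "u = of_real (1 / norm x) *s x"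
    have nu: "norm u = 1" unfolding u_def norm_smult_c norm_of_real using False by simp
    have "complex_of_real (norm x) * complex_of_real (1 / norm x) = 1"
      using False by (simp flip: of_real_mult)
    then have xu: "x = of_real (norm x) *s u" by (simp add: u_def vector_smult_assoc)
    have "hform Q x = of_real ((norm x)^2) * hform Q u"
      by (subst xu) (simp add: hform_scale power2_eq_square)
    then have "Re (hform Q x) = (norm x)^2 * Re (hform Q u)" by simp
    moreover have "m \<le> Re (hform Q u)" unfolding m_def using x1(2)[of u] nu by simp
    ultimately show ?thesis by (metis mult.commute mult_right_mono zero_le_power2)
  qed
  define M where "M = norm h0 + sqrt (\<epsilon> / m)"
  have M0: "0 \<le> M" unfolding M_def using m0 assms(4) by simp
  have Ebound: "norm h \<le> M" if "Re (hform Q (h - h0)) \<le> \<epsilon>" for h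
  proof -
    have "m * (norm (h - h0))^2 \<le> \<epsilon>" using mbound[of "h - h0"] that by simp
    then have "(norm (h - h0))^2 \<le> \<epsilon> / m" using m0 by (simp add: field_simps)
    then have "norm (h - h0) \<le> sqrt (\<epsilon> / m)" by (simp add: real_le_rsqrt)
    then show ?thesis unfolding M_def using norm_triangle_ineq2[of h h0] by linarith
  qed
  define F where "F = {v. (norm v)^2 \<le> Pbar \<and> (\<forall>h. Re (hform Q (h - h0)) \<le> \<epsilon> \<longrightarrow> (cmod (ip h v))^2 \<le> Pt)}"
  define g where "g = (\<lambda>v. (cmod (ip hs v))^2)"
  have Ffeas: "P1_feasible Pbar Pt \<epsilon> R h0 (outer v)" if "v \<in> F" for v
    using that unfolding F_def Q_def by (intro outer_feasible) auto
  have cF: "closed F"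
  proof -
    have c1: "closed {v::complex^'n. (norm v)^2 \<le> Pbar}"
      by (intro closed_Collect_le continuous_intros)
    have c2: "closed {v. Re (hform Q (h - h0)) \<le> \<epsilon> \<longrightarrow> (cmod (ip h v))^2 \<le> Pt}" for h
    proof (cases "Re (hform Q (h - h0)) \<le> \<epsilon>")
      case True
      have "closed {v. (cmod (ip h v))^2 \<le> Pt}"
        unfolding ip_def by (intro closed_Collect_le continuous_intros)
      then show ?thesis using True by simp
    next
      case False then show ?thesis by simp
    qed
    have "F = {v::complex^'n. (norm v)^2 \<le> Pbar} \<inter> {v. \<forall>h. Re (hform Q (h - h0)) \<le> \<epsilon> \<longrightarrow> (cmod (ip h v))^2 \<le> Pt}"
      unfolding F_def by blast
    moreover have "closed {v. \<forall>h. Re (hform Q (h - h0)) \<le> \<epsilon> \<longrightarrow> (cmod (ip h v))^2 \<le> Pt}"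
      by (rule closed_Collect_all) (rule c2)
    ultimately show ?thesis using c1 by (simp add: closed_Int)
  qed
  have bF: "bounded F"
  proof (rule bounded_subset[OF bounded_cball[of 0 "sqrt Pbar"]])
    show "F \<subseteq> cball 0 (sqrt Pbar)" unfolding F_def by (auto simp: real_le_rsqrt)
  qed
  have kF: "compact F" using cF bF by (simp add: compact_eq_bounded_closed)
  have zF: "0 \<in> F" unfolding F_def using assms by (simp add: ip_def)
  have cg: "continuous_on F g" unfolding g_def ip_def by (intro continuous_intros)
  obtain v1 where v1: "v1 \<in> F" "\<And>y. y \<in> F \<Longrightarrow> g y \<le> g v1"
    using continuous_attains_sup[OF kF _ cg] zF by blast
  obtain k :: 'n where True by simp
  define c where "c = min (sqrt Pbar) (sqrt Pt / (M + 1))"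
  have c0: "0 < c" unfolding c_def using assms M0 by simp
  define v0 where "v0 = of_real c *s axis k (1::complex)"
  have v0nz: "v0 \<noteq> 0"
  proof
    assume "v0 = 0"
    then have "v0 $ k = 0" by simp
    then show False using c0 by (simp add: v0_def axis_def)
  qed
  have v0F: "v0 \<in> F"
  proof -
    have nv0: "norm v0 = c" using c0 by (simp add: v0_def norm_smult_c norm_axis_c)
    have "c \<le> sqrt Pbar" unfolding c_def by simp
    then have "c^2 \<le> Pbar" using c0 assms(2) by (metis less_imp_le power_mono real_sqrt_pow2)
    moreover have "(cmod (ip h v0))^2 \<le> Pt" if "Re (hform Q (h - h0)) \<le> \<epsilon>" for h
    proof -
      have "cmod (ip h v0) = c * cmod (h$k)" using c0
        by (simp add: v0_def ip_scale ip_axis_right norm_mult)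
      also have "\<dots> \<le> c * M"
        using Ebound[OF that] Finite_Cartesian_Product.norm_nth_le[of h k] c0 by (simp add: order_trans)
      also have "\<dots> \<le> sqrt Pt / (M + 1) * M" 
        using M0 by (intro mult_right_mono) (auto simp: c_def)
      also have "\<dots> \<le> sqrt Pt" using M0 assms(3) by (simp add: field_simps)
      finally have "cmod (ip h v0) \<le> sqrt Pt" .
      then show ?thesis using assms(3) by (metis norm_ge_zero power_mono real_sqrt_pow2 less_imp_le)
    qed
    ultimately show ?thesis unfolding F_def using nv0 by simp
  qed
  define vs where "vs = (if v1 = 0 then v0 else v1)"
  have vsF: "vs \<in> F" using v1 v0F by (simp add: vs_def)
  have vsnz: "vs \<noteq> 0" using v0nz by (simp add: vs_def)
  have g0: "\<And>v. 0 \<le> g v" by (simp add: g_def)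
  have vsmax: "g y \<le> g vs" if "y \<in> F" for y
  proof (cases "v1 = 0")
    case True
    then have "g y \<le> 0" using v1(2)[OF that] by (simp add: g_def ip_def)
    then show ?thesis using g0[of vs] by linarith
  next
    case False then show ?thesis using v1(2)[OF that] by (simp add: vs_def)
  qed
  have opt: "P1_objective hs S' \<le> P1_objective hs (outer vs)" if feas: "P1_feasible Pbar Pt \<epsilon> R h0 S'" for S'
  proof -
    define t where "t = Re (hform S' hs)"
    have psd: "psd_mat S'" using feas unfolding P1_feasible_def by simp
    have t0: "0 \<le> t" using psd unfolding t_def psd_mat_def by simp
    have "t \<le> g vs"
    proof (cases "t = 0")
      case True then show ?thesis using g0 by simp
    next
      case False
      then have tp: "0 < t" using t0 by simp
      define w where "w = of_real (1 / sqrt t) *s (S' *v hs)"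
      have gw: "(cmod (ip x w))^2 = (cmod (sesq S' x hs))^2 / t" for x
        using tp by (simp add: w_def ip_scale ip_mv norm_divide power_divide)
      have tt: "t = Re (sesq S' hs hs)" unfolding t_def hform_sesq ..
      have bnd: "(cmod (ip x w))^2 \<le> Re (hform S' x)" for x
      proof -
        have "(cmod (sesq S' x hs))^2 \<le> Re (sesq S' x x) * t"
          using cs[OF psd, of hs x] tp tt by simp
        then show ?thesis unfolding gw hform_sesq using tp by (simp add: divide_le_eq)
      qed
      have "w \<in> F"
      proof -
        have "(norm w)^2 = (\<Sum>i\<in>UNIV. (cmod (ip (axis i 1) w))^2)"
          unfolding norm_sq_vec ip_axis ..
        also have "\<dots> \<le> (\<Sum>i\<in>UNIV. Re (hform S' (axis i 1)))"
          by (intro sum_mono bnd)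
        also have "\<dots> = Re (trace S')" by (simp add: hform_sesq sesq_axis trace_def Re_sum)
        also have "\<dots> \<le> Pbar" using feas unfolding P1_feasible_def by simp
        finally have "(norm w)^2 \<le> Pbar" .
        moreover have "(cmod (ip h w))^2 \<le> Pt" if "Re (hform Q (h - h0)) \<le> \<epsilon>" for h
          using bnd[of h] feas that unfolding P1_feasible_def Q_def by force
        ultimately show ?thesis unfolding F_def by simp
      qed
      moreover have "g w = t"
      proof -
        have herm: "hermitian_mat S'" using psd unfolding psd_mat_def by simp
        have "sesq S' hs hs = of_real t" using psd_sesq_real[OF herm] tt by simp
        then show ?thesis unfolding g_def gw using tp by (simp add: power2_eq_square)
      qed
      ultimately show ?thesis using vsmax by metis
    qed
    then show ?thesis
      unfolding P1_objective_def Re_hform_outer t_def[symmetric] using t0 g0[of vs]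
      by (simp add: g_def)
  qed
  show ?thesis
    using Ffeas[OF vsF] opt rank_outer[OF vsnz] unfolding P1_optimal_def by blast
qed

end
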